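(* Let $(G,M)$ be a transformation group, let $K\subset L\subset N$ be subsets of $M$, and let $\tau$ be an admissible topology on $\mathcal{E}^G_K(L,N)$. Suppose $H$ is a subgroup of $G_K(N)$ and the restriction map $r:G_K(N)\to\mathcal{E}^G_K(L,N)^\tau$, $r(g)=g|_L$, has a local section $s:\mathcal{U}\to H\subset G_K(N)$ at $i_L$. Then: (1) The restriction map $r|_H:H\to\mathcal{E}^H(L,N)^\tau$ is a principal bundle with structure group $H_L$. (2)(i) The topology $\tau$ coincides with the quotient topology induced by $r$. (ii) $\mathcal{E}^H(L,N)^\tau$ is open in $\mathcal{E}^G_K(L,N)^\tau$. (iii) If $H$ is a normal subgroup of $G_K(N)$, then (a) each orbit of $H$ is closed and open in $\mathcal{E}^G_K(L,N)^\tau$ (in particular $\mathcal{E}^H(L,N)^\tau$ is closed and open in $\mathcal{E}^G_K(L,N)^\tau$), and (b) if $H\subset G_K(N)_0$, then $\mathcal{E}^H(L,N)^\tau=\mathcal{E}^G_K(L,N)^\tau_0$.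
   Context: A transformation group $(G,M)$ consists of a locally compact, $\sigma$-compact Hausdorff space $M$ and a topological group $G$ acting continuously and effectively on $M$; each $g\in G$ is identified with a homeomorphism of $M$. For subsets $K,N\subset M$: $G_K=\{g\in G:g|_K=\mathrm{id}_K\}$, $G(N)=G_{M\setminus N}$, $G_K(N)=G_K\cap G(N)$; for a subgroup $H$, $H_0$ is the connected component of the identity and $H_L=\{h\in H:h|_L=\mathrm{id}_L\}$. For $K\subset L\subset N$, $\mathcal{E}^G_K(L,N)=\{g|_L:L\to M\mid g\in G_K(N)\}$; $G_K(N)$ acts on it by $g\cdot f=gf$ and $r$ is the orbit map at the inclusion $i_L:L\subset M$. A topology on $\mathcal{E}^G_K(L,N)$ is admissible if this action is continuous; $\mathcal{E}^G_K(L,N)^\tau$ denotes the set with topology $\tau$, and for a subset $\mathcal{F}$, $\mathcal{F}^\tau$ has the subspace topology and $\mathcal{F}^\tau_0$ is the connected component of $i_L$. For a subgroup $H\subset G_K(N)$, $\mathcal{E}^H(L,N)=\{h|_L:h\in H\}$. A local section of a map $f:X\to Y$ at $y$ is a map $s:U\to X$ on a neighborhood $U$ of $y$ with $fs=$ the inclusion of $U$. *)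

theory Defs
  imports "HOL-Analysis.Analysis"
begin

definition sigma_compact_space :: "'a topology \<Rightarrow> bool" where
  "sigma_compact_space X \<longleftrightarrow>
     (\<exists>C :: nat \<Rightarrow> 'a set. (\<forall>n. compactin X (C n)) \<and> (\<Union>n. C n) = topspace X)"

text \<open>A transformation group (G,M): the space M is the carrier type 'm with the
  topology TM (topspace TM = UNIV); G is a set of homeomorphisms of M (effective action,
  each element identified with a homeomorphism), carrying a group topology TG with
  topspace TG = G, group law composition, and the evaluation action G x M -> M continuous.\<close>
definition transformation_group :: "'m topology \<Rightarrow> ('m \<Rightarrow> 'm) topology \<Rightarrow> bool" where
  "transformation_group TM TG \<longleftrightarrow>
     topspace TM = UNIV \<and> Hausdorff_space TM \<and> locally_compact_space TM \<and>
     sigma_compact_space TM \<and>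
     (\<forall>g \<in> topspace TG. homeomorphic_map TM TM g) \<and>
     id \<in> topspace TG \<and>
     (\<forall>g \<in> topspace TG. \<forall>h \<in> topspace TG. g \<circ> h \<in> topspace TG) \<and>
     (\<forall>g \<in> topspace TG. inv g \<in> topspace TG) \<and>
     continuous_map (prod_topology TG TG) TG (\<lambda>(g, h). g \<circ> h) \<and>
     continuous_map TG TG inv \<and>
     continuous_map (prod_topology TG TM) TM (\<lambda>(g, x). g x)"

definition fixing :: "('m \<Rightarrow> 'm) set \<Rightarrow> 'm set \<Rightarrow> ('m \<Rightarrow> 'm) set" where
  "fixing G K = {g \<in> G. \<forall>x \<in> K. g x = x}"

text \<open>G_K(N) = G_K \<inter> G_{M - N}.\<close>
definition supp_group :: "('m \<Rightarrow> 'm) set \<Rightarrow> 'm set \<Rightarrow> 'm set \<Rightarrow> ('m \<Rightarrow> 'm) set" where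
  "supp_group G K N = fixing G K \<inter> fixing G (- N)"

text \<open>Restriction g|_L : L -> M, represented as an extensional function.\<close>
definition restr :: "'m set \<Rightarrow> ('m \<Rightarrow> 'm) \<Rightarrow> ('m \<Rightarrow> 'm)" where
  "restr L g = restrict g L"

definition incl :: "'m set \<Rightarrow> ('m \<Rightarrow> 'm)" where
  "incl L = restrict id L"

text \<open>E^H(L,N) = {h|_L : h \<in> H}; E^G_K(L,N) = emb_set (supp_group G K N) L.\<close>
definition emb_set :: "('m \<Rightarrow> 'm) set \<Rightarrow> 'm set \<Rightarrow> ('m \<Rightarrow> 'm) set" where
  "emb_set H L = restr L ` H"

definition emb_act :: "'m set \<Rightarrow> ('m \<Rightarrow> 'm) \<Rightarrow> ('m \<Rightarrow> 'm) \<Rightarrow> ('m \<Rightarrow> 'm)" where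
  "emb_act L g f = restrict (g \<circ> f) L"

definition admissible ::
  "'m set \<Rightarrow> ('m \<Rightarrow> 'm) topology \<Rightarrow> ('m \<Rightarrow> 'm) set \<Rightarrow> ('m \<Rightarrow> 'm) topology \<Rightarrow> bool" where
  "admissible L TG GKN T \<longleftrightarrow>
     topspace T = emb_set GKN L \<and>
     continuous_map (prod_topology (subtopology TG GKN) T) T (\<lambda>(g, f). emb_act L g f)"

definition is_subgroup :: "('m \<Rightarrow> 'm) set \<Rightarrow> ('m \<Rightarrow> 'm) set \<Rightarrow> bool" where
  "is_subgroup H G \<longleftrightarrow> H \<subseteq> G \<and> id \<in> H \<and>
     (\<forall>g \<in> H. \<forall>h \<in> H. g \<circ> h \<in> H) \<and> (\<forall>h \<in> H. inv h \<in> H)"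

definition is_normal_subgroup :: "('m \<Rightarrow> 'm) set \<Rightarrow> ('m \<Rightarrow> 'm) set \<Rightarrow> bool" where
  "is_normal_subgroup H G \<longleftrightarrow> is_subgroup H G \<and>
     (\<forall>g \<in> G. \<forall>h \<in> H. g \<circ> h \<circ> inv g \<in> H)"

definition nbhd :: "'a topology \<Rightarrow> 'a set \<Rightarrow> 'a \<Rightarrow> bool" where
  "nbhd X U x \<longleftrightarrow> U \<subseteq> topspace X \<and> (\<exists>V. openin X V \<and> x \<in> V \<and> V \<subseteq> U)"

definition local_section_at ::
  "'a topology \<Rightarrow> 'b topology \<Rightarrow> ('a \<Rightarrow> 'b) \<Rightarrow> 'b \<Rightarrow> 'b set \<Rightarrow> ('b \<Rightarrow> 'a) \<Rightarrow> bool" where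
  "local_section_at X Y f y U s \<longleftrightarrow>
     nbhd Y U y \<and> continuous_map (subtopology Y U) X s \<and> (\<forall>u \<in> U. f (s u) = u)"

definition principal_bundle ::
  "'p topology \<Rightarrow> 'b topology \<Rightarrow> 'k topology \<Rightarrow> ('p \<Rightarrow> 'k \<Rightarrow> 'p) \<Rightarrow> ('k \<Rightarrow> 'k \<Rightarrow> 'k)
    \<Rightarrow> ('p \<Rightarrow> 'b) \<Rightarrow> bool" where
  "principal_bundle P B K act kmult prj \<longleftrightarrow>
     continuous_map P B prj \<and> prj ` topspace P = topspace B \<and>
     continuous_map (prod_topology P K) P (\<lambda>(p, k). act p k) \<and>
     (\<forall>p \<in> topspace P. \<forall>k \<in> topspace K. prj (act p k) = prj p) \<and>
     (\<forall>b \<in> topspace B. \<exists>V \<phi>. openin B V \<and> b \<in> V \<and>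
        homeomorphic_map (subtopology P {p \<in> topspace P. prj p \<in> V})
                         (prod_topology (subtopology B V) K) \<phi> \<and>
        (\<forall>p \<in> topspace P. prj p \<in> V \<longrightarrow> fst (\<phi> p) = prj p) \<and>
        (\<forall>p \<in> topspace P. prj p \<in> V \<longrightarrow>
           (\<forall>k \<in> topspace K. snd (\<phi> (act p k)) = kmult (snd (\<phi> p)) k)))"

end

theory Submission
  imports Defs
begin

lemma cm_comp2:
  assumes "continuous_map (prod_topology X Y) W (\<lambda>(a,b). F a b)"
    "continuous_map Z X f" "continuous_map Z Y g"
  shows "continuous_map Z W (\<lambda>z. F (f z) (g z))"
  using continuous_map_compose[OF continuous_map_paired[THEN iffD2, OF conjI[OF assms(2,3)]] assms(1)]
  by (simp add: o_def)

theorem lemma3p1: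
  fixes TM :: "'m topology" and TG :: "('m \<Rightarrow> 'm) topology"
    and K L N :: "'m set" and T :: "('m \<Rightarrow> 'm) topology"
    and H :: "('m \<Rightarrow> 'm) set" and U :: "('m \<Rightarrow> 'm) set"
    and s :: "('m \<Rightarrow> 'm) \<Rightarrow> ('m \<Rightarrow> 'm)"
  defines "GKN \<equiv> supp_group (topspace TG) K N"
  assumes tg: "transformation_group TM TG"
    and KL: "K \<subseteq> L" and LN: "L \<subseteq> N"
    and adm: "admissible L TG GKN T"
    and sub: "is_subgroup H GKN"
    and sec: "local_section_at (subtopology TG GKN) T (restr L) (incl L) U s"
    and secH: "s ` U \<subseteq> H"
  shows
    "principal_bundle (subtopology TG H) (subtopology T (emb_set H L))
        (subtopology TG (fixing H L)) (\<circ>) (\<circ>) (restr L)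
     \<and> quotient_map (subtopology TG GKN) T (restr L)
     \<and> openin T (emb_set H L)
     \<and> (is_normal_subgroup H GKN \<longrightarrow>
          (\<forall>f \<in> topspace T.
              closedin T ((\<lambda>h. emb_act L h f) ` H) \<and> openin T ((\<lambda>h. emb_act L h f) ` H))
          \<and> (H \<subseteq> connected_component_of_set (subtopology TG GKN) id \<longrightarrow>
               emb_set H L = connected_component_of_set T (incl L)))"
proof -
  let ?G = "topspace TG"
  have tsTM: "topspace TM = UNIV" and homs: "\<forall>g\<in>?G. homeomorphic_map TM TM g"
    and idG: "id \<in> ?G" and compG: "\<forall>g\<in>?G. \<forall>h\<in>?G. g \<circ> h \<in> ?G"
    and invG: "\<forall>g\<in>?G. inv g \<in> ?G"
    and ccomp: "continuous_map (prod_topology TG TG) TG (\<lambda>(g,h). g \<circ> h)"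
    and cinv: "continuous_map TG TG inv"
    using tg unfolding transformation_group_def by auto
  have bijG: "bij g" if "g \<in> ?G" for g
    using homeomorphic_imp_injective_map[of TM TM g] homeomorphic_imp_surjective_map[of TM TM g]
      homs that tsTM by (simp add: bij_def)
  have invl: "inv g (g x) = x" if "g \<in> ?G" for g x
    using bijG[OF that] by (simp add: bij_is_inj)
  have invr: "g (inv g x) = x" if "g \<in> ?G" for g x
    using bijG[OF that] by (simp add: bij_is_surj surj_f_inv_f)
  have invl': "inv g \<circ> g = id" if "g \<in> ?G" for g
    using invl[OF that] by (simp add: fun_eq_iff)
  have invr': "g \<circ> inv g = id" if "g \<in> ?G" for g
    using invr[OF that] by (simp add: fun_eq_iff)
  have GKN_mem: "g \<in> GKN \<longleftrightarrow> g \<in> ?G \<and> (\<forall>x\<in>K. g x = x) \<and> (\<forall>x. x \<notin> N \<longrightarrow> g x = x)" for g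
    unfolding GKN_def supp_group_def fixing_def by auto
  have GKN_sub: "GKN \<subseteq> ?G" using GKN_mem by auto
  have idGKN: "id \<in> GKN" using GKN_mem idG by auto
  have compGKN: "g \<circ> h \<in> GKN" if "g \<in> GKN" "h \<in> GKN" for g h
    using that compG GKN_mem by auto
  have invGKN: "inv g \<in> GKN" if "g \<in> GKN" for g
  proof -
    have g: "g \<in> ?G" using that GKN_sub by auto
    have "inv g x = x" if "g x = x" for x using invl[OF g, of x] that by simp
    then show ?thesis using that invG g GKN_mem by auto
  qed
  have HG: "H \<subseteq> GKN" and idH: "id \<in> H" and compH: "\<And>g h. g \<in> H \<Longrightarrow> h \<in> H \<Longrightarrow> g \<circ> h \<in> H"
    and invH: "\<And>h. h \<in> H \<Longrightarrow> inv h \<in> H"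
    using sub unfolding is_subgroup_def by auto
  have tsT: "topspace T = restr L ` GKN" using adm unfolding admissible_def emb_set_def by auto
  have cact: "continuous_map (prod_topology (subtopology TG GKN) T) T (\<lambda>(g,f). emb_act L g f)"
    using adm unfolding admissible_def by auto
  have ea: "emb_act L g (restr L h) = restr L (g \<circ> h)" for g h
    unfolding emb_act_def restr_def by (auto simp: fun_eq_iff)
  have restr_eq: "restr L a = restr L b \<longleftrightarrow> (\<forall>x\<in>L. a x = b x)" for a b
    unfolding restr_def by (metis restrict_ext restrict_apply')
  have incl_eq: "incl L = restr L id" unfolding incl_def restr_def by simp
  have inclT: "incl L \<in> topspace T" using incl_eq tsT idGKN by auto
  have tsGKN: "topspace (subtopology TG GKN) = GKN" using GKN_sub by auto
  have cactg: "continuous_map T T (emb_act L g)" if "g \<in> GKN" for g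
  proof -
    have "continuous_map T T (\<lambda>z. emb_act L ((\<lambda>_. g) z) (id z))"
      by (rule cm_comp2[OF cact]) (use that GKN_sub in auto)
    then show ?thesis by (simp add: eta_contract_eq)
  qed
  have crestr: "continuous_map (subtopology TG GKN) T (restr L)"
  proof -
    have "continuous_map (subtopology TG GKN) T (\<lambda>z. emb_act L (id z) ((\<lambda>_. incl L) z))"
      by (rule cm_comp2[OF cact]) (auto simp: inclT)
    then show ?thesis by (simp add: incl_eq ea)
  qed
  have ccomp2: "continuous_map Z TG (\<lambda>z. f z \<circ> g z)" if "continuous_map Z TG f" "continuous_map Z TG g" for Z f g
    by (rule cm_comp2[OF ccomp that])
  obtain W where W: "openin T W" "incl L \<in> W" "W \<subseteq> U"
    using sec unfolding local_section_at_def nbhd_def by auto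
  have Usub: "U \<subseteq> topspace T" and cs: "continuous_map (subtopology T U) (subtopology TG GKN) s"
    and rs: "\<And>u. u \<in> U \<Longrightarrow> restr L (s u) = u"
    using sec unfolding local_section_at_def nbhd_def by auto
  have sH: "s u \<in> H" if "u \<in> U" for u using secH that by auto
  have key: "\<exists>V \<sigma>. openin T V \<and> restr L g0 \<in> V \<and>
      continuous_map (subtopology T V) (subtopology TG GKN) \<sigma> \<and>
      (\<forall>f\<in>V. restr L (\<sigma> f) = f \<and> (\<exists>h\<in>H. \<sigma> f = g0 \<circ> h))" if g0: "g0 \<in> GKN" for g0
  proof -
    define V where "V = {f \<in> topspace T. emb_act L (inv g0) f \<in> W}"
    define \<sigma> where "\<sigma> = (\<lambda>f. g0 \<circ> s (emb_act L (inv g0) f))"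
    have g0G: "g0 \<in> ?G" using g0 GKN_sub by auto
    have "openin T V" using openin_continuous_map_preimage[OF cactg[OF invGKN[OF g0]] W(1)] V_def by simp
    moreover have "restr L g0 \<in> V"
      using tsT g0 W(2) unfolding V_def by (auto simp: ea invl'[OF g0G] incl_eq)
    moreover have "continuous_map (subtopology T V) (subtopology TG GKN) \<sigma>"
    proof -
      have c1: "continuous_map (subtopology T V) (subtopology T U) (emb_act L (inv g0))"
        unfolding continuous_map_in_subtopology
        using continuous_map_from_subtopology[OF cactg[OF invGKN[OF g0]]] W(3) V_def by auto
      have c2: "continuous_map (subtopology T V) TG (s \<circ> emb_act L (inv g0))"
        using continuous_map_compose[OF c1 cs] continuous_map_in_subtopology by blast
      have "continuous_map (subtopology T V) TG (\<lambda>f. (\<lambda>_. g0) f \<circ> (s \<circ> emb_act L (inv g0)) f)"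
        by (rule ccomp2[OF _ c2]) (simp add: g0G)
      moreover have "\<sigma> ` topspace (subtopology T V) \<subseteq> GKN"
        using sH W(3) V_def \<sigma>_def compGKN g0 HG by (auto intro!: compGKN dest!: sH)
      ultimately show ?thesis unfolding continuous_map_in_subtopology \<sigma>_def by auto
    qed
    moreover have "restr L (\<sigma> f) = f \<and> (\<exists>h\<in>H. \<sigma> f = g0 \<circ> h)" if f: "f \<in> V" for f
    proof -
      obtain g where g: "g \<in> GKN" "f = restr L g" using f tsT V_def by auto
      define u where "u = emb_act L (inv g0) f"
      have u: "u \<in> U" using f W(3) V_def u_def by auto
      have "u = restr L (inv g0 \<circ> g)" using u_def g ea by simp
      then have "\<forall>x\<in>L. s u x = inv g0 (g x)" using rs[OF u] restr_eq by (metis comp_apply)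
      then have "restr L (\<sigma> f) = f" using g invr[OF g0G] unfolding \<sigma>_def u_def[symmetric]
        by (simp add: restr_eq)
      then show ?thesis using sH[OF u] \<sigma>_def u_def by auto
    qed
    ultimately show ?thesis by blast
  qed
  have quot: "quotient_map (subtopology TG GKN) T (restr L)"
    unfolding quotient_map_def
  proof (intro conjI allI impI)
    show "restr L ` topspace (subtopology TG GKN) = topspace T" using tsGKN tsT by simp
    fix Y assume Y: "Y \<subseteq> topspace T"
    show "openin (subtopology TG GKN) {x \<in> topspace (subtopology TG GKN). restr L x \<in> Y} \<longleftrightarrow> openin T Y"
    proof
      assume op: "openin (subtopology TG GKN) {x \<in> topspace (subtopology TG GKN). restr L x \<in> Y}"
      show "openin T Y"
        unfolding openin_subopen[of T Y]
      proof
        fix b assume b: "b \<in> Y"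
        then obtain g0 where g0: "g0 \<in> GKN" "b = restr L g0" using Y tsT by auto
        obtain V \<sigma> where V: "openin T V" "restr L g0 \<in> V"
          "continuous_map (subtopology T V) (subtopology TG GKN) \<sigma>"
          "\<forall>f\<in>V. restr L (\<sigma> f) = f \<and> (\<exists>h\<in>H. \<sigma> f = g0 \<circ> h)"
          using key[OF g0(1)] by blast
        have Vsub: "V \<subseteq> topspace T" using V(1) openin_subset by auto
        have "openin (subtopology T V) {f \<in> topspace (subtopology T V). \<sigma> f \<in> {x \<in> topspace (subtopology TG GKN). restr L x \<in> Y}}"
          by (rule openin_continuous_map_preimage[OF V(3) op])
        moreover have "{f \<in> topspace (subtopology T V). \<sigma> f \<in> {x \<in> topspace (subtopology TG GKN). restr L x \<in> Y}} = V \<inter> Y"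
          using V(3,4) Vsub unfolding continuous_map_def by auto
        ultimately have "openin T (V \<inter> Y)" using openin_trans_full V(1) by metis
        then show "\<exists>T'. openin T T' \<and> b \<in> T' \<and> T' \<subseteq> Y" using V(2) g0 b by blast
      qed
    next
      assume "openin T Y"
      then show "openin (subtopology TG GKN) {x \<in> topspace (subtopology TG GKN). restr L x \<in> Y}"
        using openin_continuous_map_preimage[OF crestr] by blast
    qed
  qed
  have EHsub: "emb_set H L \<subseteq> topspace T" using tsT HG unfolding emb_set_def by auto
  have openE: "openin T (emb_set H L)"
    unfolding openin_subopen[of T "emb_set H L"]
  proof
    fix b assume b: "b \<in> emb_set H L"
    then obtain h0 where h0: "h0 \<in> H" "b = restr L h0" unfolding emb_set_def by auto
    obtain V \<sigma> where V: "openin T V" "restr L h0 \<in> V"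
      "\<forall>f\<in>V. restr L (\<sigma> f) = f \<and> (\<exists>h\<in>H. \<sigma> f = h0 \<circ> h)"
      using key[of h0] h0 HG by blast
    have "V \<subseteq> emb_set H L"
    proof
      fix f assume "f \<in> V"
      then obtain h where "restr L (\<sigma> f) = f" "h \<in> H" "\<sigma> f = h0 \<circ> h" using V(3) by blast
      then show "f \<in> emb_set H L" unfolding emb_set_def using compH h0(1) by (metis image_eqI)
    qed
    then show "\<exists>T'. openin T T' \<and> b \<in> T' \<and> T' \<subseteq> emb_set H L" using V h0 by blast
  qed
  have ea_id: "emb_act L id f = f" if "f \<in> topspace T" for f
    using that tsT ea by auto
  have normal_part: "(\<forall>f \<in> topspace T.
              closedin T ((\<lambda>h. emb_act L h f) ` H) \<and> openin T ((\<lambda>h. emb_act L h f) ` H))"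
    if nrm: "is_normal_subgroup H GKN"
  proof -
    have conj: "g \<circ> h \<circ> inv g \<in> H" if "g \<in> GKN" "h \<in> H" for g h
      using nrm that unfolding is_normal_subgroup_def by auto
    have orbT: "(\<lambda>h. emb_act L h f) ` H \<subseteq> topspace T" if "f \<in> topspace T" for f
      using that tsT HG compGKN ea by auto
    have orbO: "openin T ((\<lambda>h. emb_act L h f) ` H)" if f: "f \<in> topspace T" for f
      unfolding openin_subopen[of T "(\<lambda>h. emb_act L h f) ` H"]
    proof
      fix b assume "b \<in> (\<lambda>h. emb_act L h f) ` H"
      then obtain h where h: "h \<in> H" "b = emb_act L h f" by auto
      obtain g where g: "g \<in> GKN" "f = restr L g" using f tsT by auto
      have gG: "g \<in> ?G" using g GKN_sub by auto
      have hg: "h \<circ> g \<in> GKN" using h g HG compGKN by auto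
      obtain V \<sigma> where V: "openin T V" "restr L (h \<circ> g) \<in> V"
        "\<forall>f\<in>V. restr L (\<sigma> f) = f \<and> (\<exists>h2\<in>H. \<sigma> f = (h \<circ> g) \<circ> h2)"
        using key[OF hg] by blast
      have "V \<subseteq> (\<lambda>h. emb_act L h f) ` H"
      proof
        fix f' assume "f' \<in> V"
        then obtain h2 where h2: "restr L (\<sigma> f') = f'" "h2 \<in> H" "\<sigma> f' = (h \<circ> g) \<circ> h2" using V(3) by blast
        have "(h \<circ> g) \<circ> h2 = (h \<circ> (g \<circ> h2 \<circ> inv g)) \<circ> g"
          using invl'[OF gG] by (simp add: o_assoc[symmetric])
        then have "f' = emb_act L (h \<circ> (g \<circ> h2 \<circ> inv g)) f" using h2 g ea by simp
        moreover have "h \<circ> (g \<circ> h2 \<circ> inv g) \<in> H" using compH conj g h2 h by blast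
        ultimately show "f' \<in> (\<lambda>h. emb_act L h f) ` H" by blast
      qed
      moreover have "b = restr L (h \<circ> g)" using h g ea by simp
      ultimately show "\<exists>T'. openin T T' \<and> b \<in> T' \<and> T' \<subseteq> (\<lambda>h. emb_act L h f) ` H"
        using V(1,2) by blast
    qed
    have orbC: "closedin T ((\<lambda>h. emb_act L h f) ` H)" if f: "f \<in> topspace T" for f
      unfolding closedin_def
    proof
      show "(\<lambda>h. emb_act L h f) ` H \<subseteq> topspace T" using orbT f .
      show "openin T (topspace T - (\<lambda>h. emb_act L h f) ` H)"
        unfolding openin_subopen[of T "topspace T - (\<lambda>h. emb_act L h f) ` H"]
      proof
        fix f' assume f': "f' \<in> topspace T - (\<lambda>h. emb_act L h f) ` H"
        have "(\<lambda>h. emb_act L h f') ` H \<subseteq> topspace T - (\<lambda>h. emb_act L h f) ` H"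
        proof (rule ccontr)
          assume nt: "\<not> ?thesis"
          have f'T: "f' \<in> topspace T" using f' by blast
          then obtain y where "y \<in> (\<lambda>h. emb_act L h f') ` H" "y \<in> (\<lambda>h. emb_act L h f) ` H"
            using orbT[OF f'T] nt by blast
          then obtain h1 h2 where hh: "h1 \<in> H" "h2 \<in> H" "emb_act L h1 f' = emb_act L h2 f"
            by blast
          obtain g where g: "g \<in> GKN" "f = restr L g" using f tsT by auto
          obtain g' where g': "g' \<in> GKN" "f' = restr L g'" using f'T tsT by auto
          have h1G: "h1 \<in> ?G" using hh HG GKN_sub by auto
          have "restr L (h1 \<circ> g') = restr L (h2 \<circ> g)" using hh(3) by (simp add: g g' ea)
          then have E: "\<forall>x\<in>L. h1 (g' x) = h2 (g x)" unfolding restr_eq by simp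
          have "\<forall>x\<in>L. g' x = (inv h1 \<circ> h2 \<circ> g) x"
          proof
            fix x assume "x \<in> L"
            with E have "h1 (g' x) = h2 (g x)" by blast
            then have "inv h1 (h1 (g' x)) = inv h1 (h2 (g x))" by simp
            then show "g' x = (inv h1 \<circ> h2 \<circ> g) x" using invl[OF h1G] by simp
          qed
          then have "f' = restr L (inv h1 \<circ> h2 \<circ> g)" using g'(2) restr_eq[of g' "inv h1 \<circ> h2 \<circ> g"] by simp
          then have "f' = emb_act L (inv h1 \<circ> h2) f" by (simp add: g(2) ea)
          moreover have "inv h1 \<circ> h2 \<in> H" using hh invH compH by auto
          ultimately have "f' \<in> (\<lambda>h. emb_act L h f) ` H" by blast
          then show False using f' by blast
        qed
        moreover have "f' \<in> (\<lambda>h. emb_act L h f') ` H" using idH ea_id[of f'] f' by (metis DiffD1 image_eqI)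
        ultimately show "\<exists>T'. openin T T' \<and> f' \<in> T' \<and> T' \<subseteq> topspace T - (\<lambda>h. emb_act L h f) ` H"
          using orbO f' by blast
      qed
    qed
    show ?thesis using orbO orbC by blast
  qed
  have orb_incl: "(\<lambda>h. emb_act L h (incl L)) ` H = emb_set H L"
    unfolding emb_set_def incl_eq by (simp add: ea)
  have conn_part: "emb_set H L = connected_component_of_set T (incl L)"
    if nrm: "is_normal_subgroup H GKN" and Hc: "H \<subseteq> connected_component_of_set (subtopology TG GKN) id"
  proof
    let ?C = "connected_component_of_set (subtopology TG GKN) id"
    have "connectedin T (restr L ` ?C)"
      by (rule connectedin_continuous_map_image[OF crestr connectedin_connected_component_of])
    moreover have "id \<in> ?C"
      using connected_component_of_refl[of "subtopology TG GKN" id] tsGKN idGKN idG by simp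
    then have "incl L \<in> restr L ` ?C"
      unfolding incl_eq by (rule imageI)
    ultimately have c1: "restr L ` ?C \<subseteq> connected_component_of_set T (incl L)"
      by (rule connected_component_of_maximal)
    have c2: "emb_set H L \<subseteq> restr L ` ?C"
      using Hc unfolding emb_set_def by (rule image_mono)
    show "emb_set H L \<subseteq> connected_component_of_set T (incl L)"
      using subset_trans[OF c2 c1] .
  next
    have "closedin T ((\<lambda>h. emb_act L h (incl L)) ` H)" using normal_part[OF nrm] inclT by blast
    then have clE: "closedin T (emb_set H L)" unfolding orb_incl .
    have cases: "connected_component_of_set T (incl L) \<subseteq> emb_set H L \<or>
        disjnt (connected_component_of_set T (incl L)) (emb_set H L)"
      by (rule connectedin_clopen_cases[OF connectedin_connected_component_of clE openE])
    have i1: "incl L \<in> connected_component_of_set T (incl L)"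
      using connected_component_of_refl[of T "incl L"] inclT by simp
    have i2: "incl L \<in> emb_set H L" unfolding emb_set_def incl_eq using idH by (rule imageI)
    have "\<not> disjnt (connected_component_of_set T (incl L)) (emb_set H L)"
      unfolding disjnt_iff using i1 i2 by blast
    then show "connected_component_of_set T (incl L) \<subseteq> emb_set H L"
      using cases by blast
  qed
  have tsP: "topspace (subtopology TG H) = H" using HG GKN_sub by auto
  have tsB: "topspace (subtopology T (emb_set H L)) = emb_set H L" using EHsub by auto
  have FH: "fixing H L \<subseteq> H" unfolding fixing_def by auto
  have tsK: "topspace (subtopology TG (fixing H L)) = fixing H L" using FH HG GKN_sub by auto
  have fixL: "k x = x" if "k \<in> fixing H L" "x \<in> L" for k x using that unfolding fixing_def by auto
  have restr_k: "restr L (p \<circ> k) = restr L p" if "k \<in> fixing H L" for p k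
    unfolding restr_eq using fixL[OF that] by simp
  have cTGH: "continuous_map (subtopology TG S) TG (\<lambda>p. p)" for S
    using continuous_map_from_subtopology[OF continuous_map_id] by (simp add: id_def)
  have pbundle: "principal_bundle (subtopology TG H) (subtopology T (emb_set H L))
        (subtopology TG (fixing H L)) (\<circ>) (\<circ>) (restr L)"
    unfolding principal_bundle_def
  proof (intro conjI ballI)
    show "continuous_map (subtopology TG H) (subtopology T (emb_set H L)) (restr L)"
      unfolding continuous_map_in_subtopology
      using continuous_map_from_subtopology_mono[OF crestr HG] tsP unfolding emb_set_def by auto
    show "restr L ` topspace (subtopology TG H) = topspace (subtopology T (emb_set H L))"
      using tsP tsB unfolding emb_set_def by simp
    have "continuous_map (prod_topology (subtopology TG H) (subtopology TG (fixing H L))) TG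
          (\<lambda>z. fst z \<circ> snd z)"
      by (rule ccomp2; rule continuous_map_compose[OF _ cTGH, unfolded o_def],
          rule continuous_map_fst continuous_map_snd)
    moreover have "(\<lambda>z. fst z \<circ> snd z) \<in> topspace (prod_topology (subtopology TG H) (subtopology TG (fixing H L))) \<rightarrow> H"
      using tsP tsK FH compH by auto
    ultimately show "continuous_map (prod_topology (subtopology TG H) (subtopology TG (fixing H L)))
        (subtopology TG H) (\<lambda>(p, k). p \<circ> k)"
      unfolding continuous_map_in_subtopology by (simp add: case_prod_beta')
  next
    fix p k assume "p \<in> topspace (subtopology TG H)" "k \<in> topspace (subtopology TG (fixing H L))"
    then show "restr L (p \<circ> k) = restr L p" using restr_k tsK by auto
  next
    fix b assume "b \<in> topspace (subtopology T (emb_set H L))"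
    then have b: "b \<in> emb_set H L" using tsB by simp
    then obtain h0 where h0: "h0 \<in> H" "b = restr L h0" unfolding emb_set_def by auto
    obtain V \<sigma> where V: "openin T V" "restr L h0 \<in> V"
      "continuous_map (subtopology T V) (subtopology TG GKN) \<sigma>"
      "\<forall>f\<in>V. restr L (\<sigma> f) = f \<and> (\<exists>h\<in>H. \<sigma> f = h0 \<circ> h)"
      using key[of h0] h0 HG by blast
    have Vsub: "V \<subseteq> topspace T" using V(1) openin_subset by auto
    have rsig: "restr L (\<sigma> f) = f" if "f \<in> V" for f using V(4) that by blast
    have sigH: "\<sigma> f \<in> H" if fV: "f \<in> V" for f
    proof -
      obtain h where "h \<in> H" "\<sigma> f = h0 \<circ> h" using V(4) fV by blast
      then show ?thesis using compH h0(1) by simp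
    qed
    have sigG: "\<sigma> f \<in> ?G" if "f \<in> V" for f using sigH[OF that] HG GKN_sub by auto
    have VE: "V \<subseteq> emb_set H L"
    proof
      fix f assume f: "f \<in> V"
      have "restr L (\<sigma> f) \<in> restr L ` H" using sigH[OF f] by (rule imageI)
      then show "f \<in> emb_set H L" unfolding emb_set_def using rsig[OF f] by simp
    qed
    have cs2: "continuous_map (subtopology T V) TG \<sigma>"
      using V(3) continuous_map_in_subtopology by blast
    have sBV: "subtopology (subtopology T (emb_set H L)) V = subtopology T V"
      using VE by (simp add: subtopology_subtopology inf_absorb2)
    define D where "D = {p \<in> H. restr L p \<in> V}"
    have sD: "subtopology (subtopology TG H) {p \<in> topspace (subtopology TG H). restr L p \<in> V} = subtopology TG D"
      unfolding D_def tsP by (simp add: subtopology_subtopology Int_absorb1 subset_iff)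
    have tsD: "topspace (subtopology TG D) = D" using D_def HG GKN_sub by auto
    define \<phi> where "\<phi> = (\<lambda>p. (restr L p, inv (\<sigma> (restr L p)) \<circ> p))"
    define \<psi> where "\<psi> = (\<lambda>z::(('m \<Rightarrow> 'm) \<times> ('m \<Rightarrow> 'm)). \<sigma> (fst z) \<circ> snd z)"
    have tsC: "topspace (prod_topology (subtopology T V) (subtopology TG (fixing H L))) = V \<times> fixing H L"
      using Vsub tsK by auto
    have cr: "continuous_map (subtopology TG D) (subtopology T V) (restr L)"
      unfolding continuous_map_in_subtopology
      using continuous_map_from_subtopology_mono[OF crestr, of D] HG D_def tsD by auto
    have fixphi: "inv (\<sigma> (restr L p)) \<circ> p \<in> fixing H L" if "p \<in> D" for p
    proof -
      have f: "restr L p \<in> V" and pH: "p \<in> H" using that D_def by auto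
      have E: "\<forall>x\<in>L. \<sigma> (restr L p) x = p x" using rsig[OF f] by (simp only: restr_eq)
      have "\<forall>x\<in>L. (inv (\<sigma> (restr L p)) \<circ> p) x = x"
      proof
        fix x assume "x \<in> L"
        then have "p x = \<sigma> (restr L p) x" using E by simp
        then show "(inv (\<sigma> (restr L p)) \<circ> p) x = x" by (simp add: invl[OF sigG[OF f]])
      qed
      moreover have "inv (\<sigma> (restr L p)) \<circ> p \<in> H" using invH compH sigH[OF f] pH by blast
      ultimately show ?thesis unfolding fixing_def by auto
    qed
    have cphi: "continuous_map (subtopology TG D) (prod_topology (subtopology T V) (subtopology TG (fixing H L))) \<phi>"
      unfolding \<phi>_def continuous_map_paired
    proof
      show "continuous_map (subtopology TG D) (subtopology T V) (restr L)" by (rule cr)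
      have "continuous_map (subtopology TG D) TG (\<lambda>p. inv (\<sigma> (restr L p)) \<circ> p)"
        by (rule ccomp2[OF continuous_map_compose[OF continuous_map_compose[OF cr cs2] cinv, unfolded o_def] cTGH])
      then show "continuous_map (subtopology TG D) (subtopology TG (fixing H L)) (\<lambda>p. inv (\<sigma> (restr L p)) \<circ> p)"
        unfolding continuous_map_in_subtopology using fixphi tsD by auto
    qed
    have cpsi: "continuous_map (prod_topology (subtopology T V) (subtopology TG (fixing H L))) (subtopology TG D) \<psi>"
    proof -
      have "continuous_map (prod_topology (subtopology T V) (subtopology TG (fixing H L))) TG \<psi>"
        unfolding \<psi>_def
        by (rule ccomp2[OF continuous_map_compose[OF continuous_map_fst cs2, unfolded o_def]
              continuous_map_compose[OF continuous_map_snd cTGH, unfolded o_def]])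
      moreover have "\<psi> z \<in> D" if "z \<in> V \<times> fixing H L" for z
      proof -
        have "\<sigma> (fst z) \<circ> snd z \<in> H" using that sigH FH compH by auto
        moreover have "restr L (\<sigma> (fst z) \<circ> snd z) = fst z" using that restr_k rsig by auto
        ultimately show ?thesis unfolding \<psi>_def D_def using that by auto
      qed
      ultimately show ?thesis unfolding continuous_map_in_subtopology using tsC by auto
    qed
    have inv1: "\<psi> (\<phi> p) = p" if "p \<in> D" for p
    proof -
      have "restr L p \<in> V" using that D_def by auto
      then show ?thesis unfolding \<psi>_def \<phi>_def using invr'[OF sigG] by (simp add: o_assoc)
    qed
    have inv2: "\<phi> (\<psi> z) = z" if zV: "z \<in> V \<times> fixing H L" for z
    proof -
      obtain f k where z: "z = (f, k)" "f \<in> V" "k \<in> fixing H L" using zV by (cases z) auto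
      have "restr L (\<sigma> f \<circ> k) = f" using restr_k[OF z(3)] rsig[OF z(2)] by simp
      then show ?thesis unfolding \<psi>_def \<phi>_def using z invl'[OF sigG[OF z(2)]] by (simp add: o_assoc)
    qed
    have hm: "homeomorphic_map (subtopology TG D) (prod_topology (subtopology T V) (subtopology TG (fixing H L))) \<phi>"
    proof -
      have "homeomorphic_maps (subtopology TG D) (prod_topology (subtopology T V) (subtopology TG (fixing H L))) \<phi> \<psi>"
        unfolding homeomorphic_maps_def tsD tsC using cphi cpsi inv1 inv2 by blast
      then show ?thesis unfolding homeomorphic_map_maps by blast
    qed
    show "\<exists>V \<phi>. openin (subtopology T (emb_set H L)) V \<and> b \<in> V \<and>
        homeomorphic_map (subtopology (subtopology TG H) {p \<in> topspace (subtopology TG H). restr L p \<in> V})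
         (prod_topology (subtopology (subtopology T (emb_set H L)) V) (subtopology TG (fixing H L))) \<phi> \<and>
        (\<forall>p\<in>topspace (subtopology TG H). restr L p \<in> V \<longrightarrow> fst (\<phi> p) = restr L p) \<and>
        (\<forall>p\<in>topspace (subtopology TG H). restr L p \<in> V \<longrightarrow>
            (\<forall>k\<in>topspace (subtopology TG (fixing H L)). snd (\<phi> (p \<circ> k)) = snd (\<phi> p) \<circ> k))"
    proof (intro exI conjI)
      show "openin (subtopology T (emb_set H L)) V"
        unfolding openin_subtopology using V(1) VE by blast
      show "b \<in> V" using V(2) h0 by simp
      show "homeomorphic_map (subtopology (subtopology TG H) {p \<in> topspace (subtopology TG H). restr L p \<in> V})
         (prod_topology (subtopology (subtopology T (emb_set H L)) V) (subtopology TG (fixing H L))) \<phi>"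
        unfolding sD sBV by (rule hm)
      show "\<forall>p\<in>topspace (subtopology TG H). restr L p \<in> V \<longrightarrow> fst (\<phi> p) = restr L p"
        unfolding \<phi>_def by simp
      show "\<forall>p\<in>topspace (subtopology TG H). restr L p \<in> V \<longrightarrow>
            (\<forall>k\<in>topspace (subtopology TG (fixing H L)). snd (\<phi> (p \<circ> k)) = snd (\<phi> p) \<circ> k)"
        unfolding \<phi>_def tsK using restr_k by (simp add: o_assoc)
    qed
  qed
  show ?thesis using pbundle quot openE normal_part conn_part by blast
qed

end
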